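(* Assume (A1). Let $\delta>0$, $\beta>0$, and $\mathcal R=\{r_1,\dots,r_m\}$ with positive integers $r_1<\dots<r_m\le t$. Suppose the event $E$ described in the context holds. Then for every $1\le k\le m-1$, $$\lVert\hat{\bm C}^{[r_k]}(t)-\hat{\bm C}^{[r_{k+1}]}(t)\rVert_\infty>\mathcal T(k)\ \Longrightarrow\ \sum_{u=t-r_{k+1}+1}^{t-1}\lVert\bm C(u)-\bm C(u+1)\rVert_\infty>\frac{A_{\delta,n,m}\,\beta}{\sqrt{r_k}}.$$
   Context: For matrices $\lVert\bm M\rVert_\infty=\max_{i,j}|M_{ij}|$. Let $\ell_1,\dots,\ell_n:\mathbb{R}^d\to\{-1,1\}$ be functions and $X_1,X_2,\dots$ random inputs with $X_k\sim D_k$; (A1): for every finite $t$, $(X_1,\dots,X_t)\sim\prod_{k=1}^tD_k$. Correlation matrix $C_{ij}(k)=\mathbb{E}_{X\sim D_k}[\ell_i(X)\ell_j(X)]$; $\bm C^{[r]}(t)=\frac1r\sum_{k=t-r+1}^t\bm C(k)$; $\hat{\bm C}^{[r]}(t)=\frac1r\sum_{k=t-r+1}^t\bm v_k\bm v_k^T$ with $\bm v_k=(\ell_1(X_k),\dots,\ell_n(X_k))^T$. Let $A_{\delta,n,m}=\sqrt{2\ln[(2m-1)n(n-1)/\delta]}$ and, for $k\le m-1$, $\mathcal T(k)=\frac{2\beta A_{\delta,n,m}}{\sqrt{r_k}}+A_{\delta,n,m}\sqrt{\frac{1-r_k/r_{k+1}}{r_k}}$. The event $E$: for all $k\le m$,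 $\lVert\bm C(t)-\hat{\bm C}^{[r_k]}(t)\rVert_\infty\le\frac{A_{\delta,n,m}}{\sqrt{r_k}}+\lVert\bm C(t)-\bm C^{[r_k]}(t)\rVert_\infty$, and for all $k\le m-1$, $\lVert\bm C^{[r_k]}(t)-\bm C^{[r_{k+1}]}(t)-\hat{\bm C}^{[r_k]}(t)+\hat{\bm C}^{[r_{k+1}]}(t)\rVert_\infty\le A_{\delta,n,m}\sqrt{\frac{1-r_k/r_{k+1}}{r_k}}$. *)

theory Defs
  imports "HOL-Probability.Probability"
begin

text \<open>n x n matrices are represented as functions nat => nat => real, indexed by 1..n.\<close>

definition supnorm :: "nat \<Rightarrow> (nat \<Rightarrow> nat \<Rightarrow> real) \<Rightarrow> real" where
  "supnorm n M = Max {\<bar>M i j\<bar> | i j. i \<in> {1..n} \<and> j \<in> {1..n}}"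

definition mdiff :: "(nat \<Rightarrow> nat \<Rightarrow> real) \<Rightarrow> (nat \<Rightarrow> nat \<Rightarrow> real) \<Rightarrow> (nat \<Rightarrow> nat \<Rightarrow> real)" where
  "mdiff M N = (\<lambda>i j. M i j - N i j)"

definition Cmat :: "(nat \<Rightarrow> (real ^ 'd) measure) \<Rightarrow> (nat \<Rightarrow> real ^ 'd \<Rightarrow> real) \<Rightarrow> nat \<Rightarrow> nat \<Rightarrow> nat \<Rightarrow> real"
  where "Cmat D l k = (\<lambda>i j. LINT x|D k. l i x * l j x)"

definition Cavg :: "(nat \<Rightarrow> (real ^ 'd) measure) \<Rightarrow> (nat \<Rightarrow> real ^ 'd \<Rightarrow> real) \<Rightarrow> nat \<Rightarrow> nat \<Rightarrow> nat \<Rightarrow> nat \<Rightarrow> real"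
  where "Cavg D l r t = (\<lambda>i j. (1 / real r) * (\<Sum>k\<in>{t - r + 1..t}. Cmat D l k i j))"

text \<open>Empirical windowed average hat C^[r](t) for a realisation x of the inputs (x k = X_k).\<close>
definition Chat :: "(nat \<Rightarrow> real ^ 'd \<Rightarrow> real) \<Rightarrow> (nat \<Rightarrow> real ^ 'd) \<Rightarrow> nat \<Rightarrow> nat \<Rightarrow> nat \<Rightarrow> nat \<Rightarrow> real"
  where "Chat l x r t = (\<lambda>i j. (1 / real r) * (\<Sum>k\<in>{t - r + 1..t}. l i (x k) * l j (x k)))"

definition Aconst :: "real \<Rightarrow> nat \<Rightarrow> nat \<Rightarrow> real" where
  "Aconst \<delta> n m = sqrt (2 * ln ((2 * real m - 1) * real n * (real n - 1) / \<delta>))"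

definition Tthr :: "real \<Rightarrow> real \<Rightarrow> nat \<Rightarrow> nat \<Rightarrow> (nat \<Rightarrow> nat) \<Rightarrow> nat \<Rightarrow> real" where
  "Tthr \<beta> \<delta> n m r k =
     2 * \<beta> * Aconst \<delta> n m / sqrt (real (r k))
     + Aconst \<delta> n m * sqrt ((1 - real (r k) / real (r (k+1))) / real (r k))"

definition eventE :: "real \<Rightarrow> nat \<Rightarrow> nat \<Rightarrow> (nat \<Rightarrow> nat) \<Rightarrow> nat \<Rightarrow>
    (nat \<Rightarrow> (real ^ 'd) measure) \<Rightarrow> (nat \<Rightarrow> real ^ 'd \<Rightarrow> real) \<Rightarrow> (nat \<Rightarrow> real ^ 'd) \<Rightarrow> bool" where
  "eventE \<delta> n m r t D l x \<longleftrightarrow>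
     (\<forall>k\<in>{1..m}. supnorm n (mdiff (Cmat D l t) (Chat l x (r k) t))
        \<le> Aconst \<delta> n m / sqrt (real (r k)) + supnorm n (mdiff (Cmat D l t) (Cavg D l (r k) t))) \<and>
     (\<forall>k\<in>{1..m-1}. supnorm n (\<lambda>i j. Cavg D l (r k) t i j - Cavg D l (r (k+1)) t i j
                                   - Chat l x (r k) t i j + Chat l x (r (k+1)) t i j)
        \<le> Aconst \<delta> n m * sqrt ((1 - real (r k) / real (r (k+1))) / real (r k)))"

end

theory Submission
  imports Defs
begin

lemma chain_le:
  fixes f :: "nat \<Rightarrow> real"
  shows "u \<le> v \<Longrightarrow> \<bar>f u - f v\<bar> \<le> (\<Sum>w\<in>{u..<v}. \<bar>f w - f (w+1)\<bar>)"
proof (induction v)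
  case 0 then show ?case by simp
next
  case (Suc v)
  show ?case
  proof (cases "u = Suc v")
    case True then show ?thesis by simp
  next
    case False
    then have "u \<le> v" using Suc by simp
    then have "\<bar>f u - f v\<bar> \<le> (\<Sum>w\<in>{u..<v}. \<bar>f w - f (w+1)\<bar>)" using Suc by simp
    moreover have "(\<Sum>w\<in>{u..<Suc v}. \<bar>f w - f (w+1)\<bar>) = (\<Sum>w\<in>{u..<v}. \<bar>f w - f (w+1)\<bar>) + \<bar>f v - f (v+1)\<bar>"
      using \<open>u \<le> v\<close> by simp
    ultimately show ?thesis by simp
  qed
qed

lemma chain_le2:
  fixes f :: "nat \<Rightarrow> real"
  assumes "a \<le> u" "u \<le> b" "a \<le> v" "v \<le> b"
  shows "\<bar>f u - f v\<bar> \<le> (\<Sum>w\<in>{a..<b}. \<bar>f w - f (w+1)\<bar>)"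
proof -
  have gen: "\<bar>f x - f y\<bar> \<le> (\<Sum>w\<in>{a..<b}. \<bar>f w - f (w+1)\<bar>)" if "a \<le> x" "x \<le> y" "y \<le> b" for x y
  proof -
    have "\<bar>f x - f y\<bar> \<le> (\<Sum>w\<in>{x..<y}. \<bar>f w - f (w+1)\<bar>)" using chain_le that by blast
    also have "\<dots> \<le> (\<Sum>w\<in>{a..<b}. \<bar>f w - f (w+1)\<bar>)"
      by (rule sum_mono2) (use that in auto)
    finally show ?thesis .
  qed
  show ?thesis
  proof (cases "u \<le> v")
    case True then show ?thesis using gen assms by blast
  next
    case False then show ?thesis using gen[of v u] assms by (simp add: abs_minus_commute)
  qed
qed

lemma avg_diff:
  fixes f :: "nat \<Rightarrow> real"
  assumes r: "0 < r" "r \<le> R" "R \<le> t"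
  shows "\<bar>(1 / real r) * (\<Sum>u\<in>{t-r+1..t}. f u) - (1 / real R) * (\<Sum>v\<in>{t-R+1..t}. f v)\<bar>
          \<le> (\<Sum>w\<in>{t-R+1..t-1}. \<bar>f w - f (w+1)\<bar>)"
proof -
  define S where "S = (\<Sum>w\<in>{t-R+1..t-1}. \<bar>f w - f (w+1)\<bar>)"
  have Seq: "S = (\<Sum>w\<in>{t-R+1..<t}. \<bar>f w - f (w+1)\<bar>)"
    unfolding S_def using r by (intro sum.cong) auto
  have bnd: "\<bar>f u - f v\<bar> \<le> S" if "u \<in> {t-r+1..t}" "v \<in> {t-R+1..t}" for u v
    unfolding Seq using that r by (intro chain_le2) auto
  have c1: "card {t-r+1..t} = r" using r by simp
  have c2: "card {t-R+1..t} = R" using r by simp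
  have eq: "(\<Sum>u\<in>{t-r+1..t}. \<Sum>v\<in>{t-R+1..t}. f u - f v) = real R * (\<Sum>u\<in>{t-r+1..t}. f u) - real r * (\<Sum>v\<in>{t-R+1..t}. f v)"
  proof -
    have "(\<Sum>u\<in>{t-r+1..t}. \<Sum>v\<in>{t-R+1..t}. f u - f v) = (\<Sum>u\<in>{t-r+1..t}. real R * f u - (\<Sum>v\<in>{t-R+1..t}. f v))"
      by (intro sum.cong refl) (simp only: sum_subtractf sum_constant c2)
    also have "\<dots> = real R * (\<Sum>u\<in>{t-r+1..t}. f u) - real r * (\<Sum>v\<in>{t-R+1..t}. f v)"
      by (simp only: sum_subtractf sum_distrib_left[symmetric] sum_constant c1)
    finally show ?thesis .
  qed
  have rR: "real r > 0" "real R > 0" using r by auto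
  have E1: "(1 / real r) * (\<Sum>u\<in>{t-r+1..t}. f u) - (1 / real R) * (\<Sum>v\<in>{t-R+1..t}. f v)
        = (\<Sum>u\<in>{t-r+1..t}. \<Sum>v\<in>{t-R+1..t}. f u - f v) / (real r * real R)"
    unfolding eq using rR by (simp add: field_simps)
  have E2: "\<bar>\<Sum>u\<in>{t-r+1..t}. \<Sum>v\<in>{t-R+1..t}. f u - f v\<bar> \<le> (\<Sum>u\<in>{t-r+1..t}. \<Sum>v\<in>{t-R+1..t}. S)"
  proof -
    have "\<bar>\<Sum>u\<in>{t-r+1..t}. \<Sum>v\<in>{t-R+1..t}. f u - f v\<bar> \<le> (\<Sum>u\<in>{t-r+1..t}. \<bar>\<Sum>v\<in>{t-R+1..t}. f u - f v\<bar>)"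
      by (rule sum_abs)
    also have "\<dots> \<le> (\<Sum>u\<in>{t-r+1..t}. \<Sum>v\<in>{t-R+1..t}. \<bar>f u - f v\<bar>)"
      by (intro sum_mono sum_abs)
    also have "\<dots> \<le> (\<Sum>u\<in>{t-r+1..t}. \<Sum>v\<in>{t-R+1..t}. S)"
      by (intro sum_mono bnd)
    finally show ?thesis .
  qed
  have E3: "(\<Sum>u\<in>{t-r+1..t}. \<Sum>v\<in>{t-R+1..t}. S) = real r * real R * S"
    by (simp only: sum_constant c1 c2)
  have A: "\<bar>(1 / real r) * (\<Sum>u\<in>{t-r+1..t}. f u) - (1 / real R) * (\<Sum>v\<in>{t-R+1..t}. f v)\<bar>
      = \<bar>\<Sum>u\<in>{t-r+1..t}. \<Sum>v\<in>{t-R+1..t}. f u - f v\<bar> / (real r * real R)"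
    unfolding E1 using rR by (simp add: abs_divide)
  have B: "\<bar>\<Sum>u\<in>{t-r+1..t}. \<Sum>v\<in>{t-R+1..t}. f u - f v\<bar> \<le> real r * real R * S"
    using E2 E3 by linarith
  have "\<bar>\<Sum>u\<in>{t-r+1..t}. \<Sum>v\<in>{t-R+1..t}. f u - f v\<bar> / (real r * real R) \<le> S"
    using B rR by (simp add: divide_le_eq mult.commute)
  then show ?thesis using A unfolding S_def by simp
qed

lemma supnorm_ge:
  assumes "i \<in> {1..n}" "j \<in> {1..n}"
  shows "\<bar>M i j\<bar> \<le> supnorm n M"
proof -
  have fin: "finite {\<bar>M i j\<bar> | i j. i \<in> {1..n} \<and> j \<in> {1..n}}"
  proof -
    have "{\<bar>M i j\<bar> | i j. i \<in> {1..n} \<and> j \<in> {1..n}} = (\<lambda>(i,j). \<bar>M i j\<bar>) ` ({1..n} \<times> {1..n})" by fastforce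
    then show ?thesis by simp
  qed
  show ?thesis unfolding supnorm_def using assms by (intro Max_ge fin) blast
qed

lemma supnorm_attained:
  assumes "n \<ge> 1"
  shows "\<exists>i\<in>{1..n}. \<exists>j\<in>{1..n}. supnorm n M = \<bar>M i j\<bar>"
proof -
  have eqs: "{\<bar>M i j\<bar> | i j. i \<in> {1..n} \<and> j \<in> {1..n}} = (\<lambda>(i,j). \<bar>M i j\<bar>) ` ({1..n} \<times> {1..n})" by fastforce
  have "supnorm n M \<in> {\<bar>M i j\<bar> | i j. i \<in> {1..n} \<and> j \<in> {1..n}}"
    unfolding supnorm_def eqs using assms by (intro Max_in) auto
  then show ?thesis by blast
qed

theorem proposition8:
  fixes M :: "'w measure"
    and X :: "nat \<Rightarrow> 'w \<Rightarrow> real ^ 'd"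
    and D :: "nat \<Rightarrow> (real ^ 'd) measure"
    and l :: "nat \<Rightarrow> real ^ 'd \<Rightarrow> real"
    and n m t :: nat and r :: "nat \<Rightarrow> nat"
    and \<delta> \<beta> :: real and \<omega> :: 'w
  assumes n2: "n \<ge> 2"
    and l_pm1: "\<And>i x. i \<in> {1..n} \<Longrightarrow> l i x \<in> {-1, 1}"
    and l_meas: "\<And>i. i \<in> {1..n} \<Longrightarrow> l i \<in> borel_measurable borel"
    and M_prob: "prob_space M"
    and D_prob: "\<And>k. prob_space (D k)"
    and D_sets: "\<And>k. sets (D k) = sets borel"
    and X_meas: "\<And>k. X k \<in> measurable M borel"
    and A1: "\<And>s. distr M (PiM {1..s} (\<lambda>_. borel)) (\<lambda>w. \<lambda>k\<in>{1..s}. X k w) = PiM {1..s} D"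
    and \<delta>_pos: "\<delta> > 0" and \<beta>_pos: "\<beta> > 0"
    and r_pos: "r 1 > 0"
    and r_mono: "\<And>k. k \<in> {1..<m} \<Longrightarrow> r k < r (k+1)"
    and r_le_t: "r m \<le> t"
    and \<omega>_in: "\<omega> \<in> space M"
    and E: "eventE \<delta> n m r t D l (\<lambda>k. X k \<omega>)"
    and k: "1 \<le> k" "k \<le> m - 1"
  shows "supnorm n (mdiff (Chat l (\<lambda>k. X k \<omega>) (r k) t) (Chat l (\<lambda>k. X k \<omega>) (r (k+1)) t)) > Tthr \<beta> \<delta> n m r k
     \<Longrightarrow> (\<Sum>u\<in>{t - r (k+1) + 1..t - 1}. supnorm n (mdiff (Cmat D l u) (Cmat D l (u+1))))
         > Aconst \<delta> n m * \<beta> / sqrt (real (r k))"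
proof -
  assume H: "supnorm n (mdiff (Chat l (\<lambda>k. X k \<omega>) (r k) t) (Chat l (\<lambda>k. X k \<omega>) (r (k+1)) t)) > Tthr \<beta> \<delta> n m r k"
  define A where "A = Aconst \<delta> n m"
  have km: "k + 1 \<le> m" using k by linarith
  have rmono: "\<And>j. a \<ge> 1 \<Longrightarrow> a + j \<le> m \<Longrightarrow> r a \<le> r (a + j)" for a
  proof -
    fix j show "a \<ge> 1 \<Longrightarrow> a + j \<le> m \<Longrightarrow> r a \<le> r (a + j)"
    proof (induction j)
      case 0 then show ?case by simp
    next
      case (Suc j)
      then have "r a \<le> r (a + j)" by simp
      moreover have "r (a + j) < r (a + j + 1)" using Suc.prems by (intro r_mono) auto
      ultimately show ?case by simp
    qed
  qed
  have rk_pos: "r k > 0" using rmono[of 1 "k - 1"] k km r_pos by simp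
  have rk_le: "r k \<le> r (k+1)" using r_mono[of k] k km by simp
  have rk1_le: "r (k+1) \<le> t" using rmono[of "k+1" "m - (k+1)"] km r_le_t k by simp
  obtain i j where ij: "i \<in> {1..n}" "j \<in> {1..n}"
    and ijeq: "supnorm n (mdiff (Chat l (\<lambda>k. X k \<omega>) (r k) t) (Chat l (\<lambda>k. X k \<omega>) (r (k+1)) t))
       = \<bar>mdiff (Chat l (\<lambda>k. X k \<omega>) (r k) t) (Chat l (\<lambda>k. X k \<omega>) (r (k+1)) t) i j\<bar>"
    using supnorm_attained[of n] n2 by (meson le_trans one_le_numeral)
  define a where "a = Chat l (\<lambda>k. X k \<omega>) (r k) t i j"
  define b where "b = Chat l (\<lambda>k. X k \<omega>) (r (k+1)) t i j"
  define c where "c = Cavg D l (r k) t i j"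
  define d where "d = Cavg D l (r (k+1)) t i j"
  define sq where "sq = sqrt ((1 - real (r k) / real (r (k+1))) / real (r k))"
  have H1: "\<bar>a - b\<bar> > 2 * \<beta> * A / sqrt (real (r k)) + A * sq"
    using H ijeq unfolding a_def b_def Tthr_def A_def sq_def mdiff_def by simp
  have kin: "k \<in> {1..m-1}" using k by simp
  have E2: "supnorm n (\<lambda>i j. Cavg D l (r k) t i j - Cavg D l (r (k+1)) t i j
                                   - Chat l (\<lambda>k. X k \<omega>) (r k) t i j + Chat l (\<lambda>k. X k \<omega>) (r (k+1)) t i j)
        \<le> A * sq"
    using E kin unfolding eventE_def A_def sq_def by blast
  have H2: "\<bar>c - d - a + b\<bar> \<le> A * sq"
    using supnorm_ge[OF ij, of "\<lambda>i j. Cavg D l (r k) t i j - Cavg D l (r (k+1)) t i j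
                                   - Chat l (\<lambda>k. X k \<omega>) (r k) t i j + Chat l (\<lambda>k. X k \<omega>) (r (k+1)) t i j"] E2
    unfolding a_def b_def c_def d_def by simp
  have H3: "\<bar>c - d\<bar> \<le> (\<Sum>u\<in>{t - r (k+1) + 1..t - 1}. \<bar>Cmat D l u i j - Cmat D l (u+1) i j\<bar>)"
    unfolding c_def d_def Cavg_def using avg_diff[OF rk_pos rk_le rk1_le, of "\<lambda>u. Cmat D l u i j"] by simp
  have H4: "(\<Sum>u\<in>{t - r (k+1) + 1..t - 1}. \<bar>Cmat D l u i j - Cmat D l (u+1) i j\<bar>)
      \<le> (\<Sum>u\<in>{t - r (k+1) + 1..t - 1}. supnorm n (mdiff (Cmat D l u) (Cmat D l (u+1))))"
    by (intro sum_mono) (use supnorm_ge[OF ij] in \<open>simp add: mdiff_def\<close>)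
  have sk: "sqrt (real (r k)) > 0" using rk_pos by simp
  have S0: "(\<Sum>u\<in>{t - r (k+1) + 1..t - 1}. supnorm n (mdiff (Cmat D l u) (Cmat D l (u+1)))) \<ge> 0"
    using H3 H4 by linarith
  show "(\<Sum>u\<in>{t - r (k+1) + 1..t - 1}. supnorm n (mdiff (Cmat D l u) (Cmat D l (u+1))))
         > Aconst \<delta> n m * \<beta> / sqrt (real (r k))"
  proof (cases "A \<ge> 0")
    case A0: True
    have "A * \<beta> / sqrt (real (r k)) \<ge> 0" using A0 \<beta>_pos by simp
    have "2 * \<beta> * A / sqrt (real (r k)) = 2 * (A * \<beta> / sqrt (real (r k)))" by simp
    with \<open>A * \<beta> / sqrt (real (r k)) \<ge> 0\<close>
    have "A * \<beta> / sqrt (real (r k)) \<le> 2 * \<beta> * A / sqrt (real (r k))" by linarith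
    then show ?thesis
      using H1 H2 H3 H4 unfolding A_def[symmetric] by linarith
  next
    case False
    then have "A * \<beta> / sqrt (real (r k)) < 0" using \<beta>_pos sk
      by (simp add: divide_neg_pos mult_neg_pos)
    then show ?thesis using S0 unfolding A_def[symmetric] by linarith
  qed
qed

end
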